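(* Let $R$ be a simple ring, $\delta$ a derivation of $R$, and $S=R[x;\delta]$ the differential polynomial ring. If $S$ is left quasi-duo or right quasi-duo, then $R$ is a field and $\delta=0$.
   Context: All rings are unital and associative. A derivation of $R$ is an additive map $\delta:R\to R$ with $\delta(rs)=r\delta(s)+\delta(r)s$. The differential polynomial ring $R[x;\delta]$ is, as a left $R$-module, the polynomial ring $R[x]$, with multiplication determined by $xr=rx+\delta(r)$ for $r\in R$. A ring is left (right) quasi-duo if every maximal left (right) ideal is two-sided. *)

theory Defs
  imports "HOL-Algebra.Algebra"
begin

definition simple_ring :: "('a, 'm) ring_scheme \<Rightarrow> bool" where
  "simple_ring R \<longleftrightarrow> ring R \<and> carrier R \<noteq> {\<zero>\<^bsub>R\<^esub>} \<and>
     (\<forall>I. ideal I R \<longrightarrow> I = {\<zero>\<^bsub>R\<^esub>} \<or> I = carrier R)"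

definition derivation :: "('a, 'm) ring_scheme \<Rightarrow> ('a \<Rightarrow> 'a) \<Rightarrow> bool" where
  "derivation R \<delta> \<longleftrightarrow> \<delta> \<in> carrier R \<rightarrow> carrier R \<and>
     (\<forall>r\<in>carrier R. \<forall>s\<in>carrier R. \<delta> (r \<oplus>\<^bsub>R\<^esub> s) = \<delta> r \<oplus>\<^bsub>R\<^esub> \<delta> s) \<and>
     (\<forall>r\<in>carrier R. \<forall>s\<in>carrier R.
        \<delta> (r \<otimes>\<^bsub>R\<^esub> s) = r \<otimes>\<^bsub>R\<^esub> \<delta> s \<oplus>\<^bsub>R\<^esub> \<delta> r \<otimes>\<^bsub>R\<^esub> s)"

definition left_ideal :: "'a set \<Rightarrow> ('a, 'm) ring_scheme \<Rightarrow> bool" where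
  "left_ideal I R \<longleftrightarrow> additive_subgroup I R \<and>
     (\<forall>a\<in>carrier R. \<forall>y\<in>I. a \<otimes>\<^bsub>R\<^esub> y \<in> I)"

definition right_ideal :: "'a set \<Rightarrow> ('a, 'm) ring_scheme \<Rightarrow> bool" where
  "right_ideal I R \<longleftrightarrow> additive_subgroup I R \<and>
     (\<forall>a\<in>carrier R. \<forall>y\<in>I. y \<otimes>\<^bsub>R\<^esub> a \<in> I)"

definition maximal_left_ideal :: "'a set \<Rightarrow> ('a, 'm) ring_scheme \<Rightarrow> bool" where
  "maximal_left_ideal I R \<longleftrightarrow> left_ideal I R \<and> I \<noteq> carrier R \<and>
     (\<forall>J. left_ideal J R \<and> I \<subseteq> J \<longrightarrow> J = I \<or> J = carrier R)"

definition maximal_right_ideal :: "'a set \<Rightarrow> ('a, 'm) ring_scheme \<Rightarrow> bool" where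
  "maximal_right_ideal I R \<longleftrightarrow> right_ideal I R \<and> I \<noteq> carrier R \<and>
     (\<forall>J. right_ideal J R \<and> I \<subseteq> J \<longrightarrow> J = I \<or> J = carrier R)"

definition left_quasi_duo :: "('a, 'm) ring_scheme \<Rightarrow> bool" where
  "left_quasi_duo R \<longleftrightarrow> (\<forall>I. maximal_left_ideal I R \<longrightarrow> ideal I R)"

definition right_quasi_duo :: "('a, 'm) ring_scheme \<Rightarrow> bool" where
  "right_quasi_duo R \<longleftrightarrow> (\<forall>I. maximal_right_ideal I R \<longrightarrow> ideal I R)"

text \<open>S (with embedding \<iota> of R and distinguished element x) is the differential
  polynomial ring R[x;\<delta>]: a ring which is a free left R-module with basis
  1, x, x^2, ..., and in which x r = r x + \<delta>(r).\<close>
definition diff_poly_ring ::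
  "('a, 'm) ring_scheme \<Rightarrow> ('a \<Rightarrow> 'a) \<Rightarrow> ('b, 'n) ring_scheme \<Rightarrow> ('a \<Rightarrow> 'b) \<Rightarrow> 'b \<Rightarrow> bool" where
  "diff_poly_ring R \<delta> S \<iota> x \<longleftrightarrow> ring R \<and> ring S \<and> \<iota> \<in> ring_hom R S \<and> x \<in> carrier S \<and>
     (\<forall>r\<in>carrier R. x \<otimes>\<^bsub>S\<^esub> \<iota> r = \<iota> r \<otimes>\<^bsub>S\<^esub> x \<oplus>\<^bsub>S\<^esub> \<iota> (\<delta> r)) \<and>
     (\<forall>s\<in>carrier S. \<exists>n f. f \<in> {..<n} \<rightarrow> carrier R \<and>
         s = (\<Oplus>\<^bsub>S\<^esub>i\<in>{..<n}. \<iota> (f i) \<otimes>\<^bsub>S\<^esub> x [^]\<^bsub>S\<^esub> (i::nat))) \<and>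
     (\<forall>n f. f \<in> {..<n} \<rightarrow> carrier R \<and>
         (\<Oplus>\<^bsub>S\<^esub>i\<in>{..<n}. \<iota> (f i) \<otimes>\<^bsub>S\<^esub> x [^]\<^bsub>S\<^esub> (i::nat)) = \<zero>\<^bsub>S\<^esub>
         \<longrightarrow> (\<forall>i<n. f i = \<zero>\<^bsub>R\<^esub>))"

end

theory Submission
  imports Defs
begin


locale dpr = ring_hom_ring R S \<iota> for R :: "('a, 'm) ring_scheme" (structure) and S :: "('b, 'n) ring_scheme" (structure) and \<iota> +
  fixes \<delta> :: "'a \<Rightarrow> 'a" and x :: 'b
  assumes x_closed: "x \<in> carrier S"
  and comm_x: "\<And>r. r \<in> carrier R \<Longrightarrow> x \<otimes>\<^bsub>S\<^esub> \<iota> r = \<iota> r \<otimes>\<^bsub>S\<^esub> x \<oplus>\<^bsub>S\<^esub> \<iota> (\<delta> r)"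
  and der: "derivation R \<delta>"
  and free: "\<And>n f. f \<in> {..<n} \<rightarrow> carrier R \<Longrightarrow>
         (\<Oplus>\<^bsub>S\<^esub>i\<in>{..<n}. \<iota> (f i) \<otimes>\<^bsub>S\<^esub> x [^]\<^bsub>S\<^esub> (i::nat)) = \<zero>\<^bsub>S\<^esub>
         \<Longrightarrow> i < n \<Longrightarrow> f i = \<zero>"
  and span: "\<And>s. s \<in> carrier S \<Longrightarrow> \<exists>n f. f \<in> {..<n} \<rightarrow> carrier R \<and>
         s = (\<Oplus>\<^bsub>S\<^esub>i\<in>{..<n}. \<iota> (f i) \<otimes>\<^bsub>S\<^esub> x [^]\<^bsub>S\<^esub> (i::nat))"
begin

definition pol :: "(nat \<Rightarrow> 'a) \<Rightarrow> nat \<Rightarrow> 'b" where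
  "pol f n = (\<Oplus>\<^bsub>S\<^esub>i\<in>{..<n}. \<iota> (f i) \<otimes>\<^bsub>S\<^esub> x [^]\<^bsub>S\<^esub> (i::nat))"

lemma delta_closed: "r \<in> carrier R \<Longrightarrow> \<delta> r \<in> carrier R"
  using der unfolding derivation_def by auto

lemma delta_add: "r \<in> carrier R \<Longrightarrow> s \<in> carrier R \<Longrightarrow> \<delta> (r \<oplus> s) = \<delta> r \<oplus> \<delta> s"
  using der unfolding derivation_def by auto

lemma delta_zero: "\<delta> \<zero> = \<zero>"
proof -
  have "\<delta> \<zero> \<oplus> \<delta> \<zero> = \<delta> \<zero> \<oplus> \<zero>"
    using delta_add[of \<zero> \<zero>] delta_closed[of \<zero>] by simp
  thus ?thesis using delta_closed[of \<zero>] by (metis R.add.l_cancel R.r_zero R.zero_closed)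
qed

lemma pol_closed: "f \<in> UNIV \<rightarrow> carrier R \<Longrightarrow> pol f n \<in> carrier S"
  unfolding pol_def using x_closed by (auto intro!: S.finsum_closed S.m_closed S.nat_pow_closed hom_closed simp: Pi_iff)

lemma pol_0: "pol f 0 = \<zero>\<^bsub>S\<^esub>"
  unfolding pol_def by simp

lemma pol_Suc: "f \<in> UNIV \<rightarrow> carrier R \<Longrightarrow>
   pol f (Suc n) = pol f n \<oplus>\<^bsub>S\<^esub> \<iota> (f n) \<otimes>\<^bsub>S\<^esub> x [^]\<^bsub>S\<^esub> n"
  unfolding pol_def using x_closed
  by (simp add: lessThan_Suc S.finsum_insert S.a_comm S.finsum_closed Pi_def)

lemma pol_add: "f \<in> UNIV \<rightarrow> carrier R \<Longrightarrow> g \<in> UNIV \<rightarrow> carrier R \<Longrightarrow>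
   pol (\<lambda>i. f i \<oplus> g i) n = pol f n \<oplus>\<^bsub>S\<^esub> pol g n"
proof (induction n)
  case 0 then show ?case by (simp add: pol_0)
next
  case (Suc n)
  have c: "f n \<in> carrier R" "g n \<in> carrier R" using Suc.prems by auto
  have fg: "(\<lambda>i. f i \<oplus> g i) \<in> UNIV \<rightarrow> carrier R" using Suc.prems by auto
  have xn: "x [^]\<^bsub>S\<^esub> n \<in> carrier S" using x_closed by simp
  show ?case
    using Suc c xn pol_closed[OF Suc.prems(1), of n] pol_closed[OF Suc.prems(2), of n]
    by (simp add: pol_Suc[OF fg] pol_Suc S.l_distr S.a_ac)
qed

lemma pol_neg: "f \<in> UNIV \<rightarrow> carrier R \<Longrightarrow>
   pol (\<lambda>i. \<ominus> f i) n = \<ominus>\<^bsub>S\<^esub> pol f n"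
proof (induction n)
  case 0 then show ?case by (simp add: pol_0)
next
  case (Suc n)
  have c: "f n \<in> carrier R" using Suc.prems by auto
  have fg: "(\<lambda>i. \<ominus> f i) \<in> UNIV \<rightarrow> carrier R" using Suc.prems by auto
  have xn: "x [^]\<^bsub>S\<^esub> n \<in> carrier S" using x_closed by simp
  show ?case
    using Suc c xn pol_closed[OF Suc.prems(1), of n]
    by (simp add: pol_Suc[OF fg] pol_Suc hom_a_inv S.l_minus S.minus_add)
qed

lemma pol_ext: "f \<in> UNIV \<rightarrow> carrier R \<Longrightarrow> \<forall>i\<ge>n. f i = \<zero> \<Longrightarrow> n \<le> N \<Longrightarrow> pol f N = pol f n"
proof (induction N)
  case 0 then show ?case by simp
next
  case (Suc N)
  show ?case
  proof (cases "n = Suc N")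
    case False
    then have "n \<le> N" using Suc by simp
    then show ?thesis using Suc pol_closed[OF Suc.prems(1), of n] x_closed
      by (simp add: pol_Suc)
  qed simp
qed

lemma pol_unique:
  assumes f: "f \<in> UNIV \<rightarrow> carrier R" "\<forall>i\<ge>n. f i = \<zero>"
    and g: "g \<in> UNIV \<rightarrow> carrier R" "\<forall>i\<ge>m. g i = \<zero>"
    and eq: "pol f n = pol g m"
  shows "f i = g i"
proof -
  define N where "N = max n m"
  have e1: "pol f N = pol g N" using pol_ext[OF f, of N] pol_ext[OF g, of N] eq N_def by simp
  have ng: "(\<lambda>i. \<ominus> g i) \<in> UNIV \<rightarrow> carrier R" using g by auto
  have "pol (\<lambda>i. f i \<oplus> \<ominus> g i) N = pol f N \<oplus>\<^bsub>S\<^esub> \<ominus>\<^bsub>S\<^esub> pol g N"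
    using pol_add[OF f(1) ng] pol_neg[OF g(1)] by simp
  also have "\<dots> = \<zero>\<^bsub>S\<^esub>" using e1 pol_closed[OF g(1)] by (simp add: S.r_neg)
  finally have z: "pol (\<lambda>i. f i \<oplus> \<ominus> g i) N = \<zero>\<^bsub>S\<^esub>" .
  show ?thesis
  proof (cases "i < N")
    case True
    have pp: "(\<lambda>i. f i \<oplus> \<ominus> g i) \<in> {..<N} \<rightarrow> carrier R" using f g by (auto simp: Pi_iff)
    have "f i \<oplus> \<ominus> g i = \<zero>"
      using free[of "\<lambda>i. f i \<oplus> \<ominus> g i" N, OF pp z[unfolded pol_def] True] by simp
    then show ?thesis using f g by (metis R.add.inv_equality R.add.inv_inv R.a_inv_closed UNIV_I Pi_iff R.minus_equality)
  next
    case False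
    then show ?thesis using f g N_def by auto
  qed
qed

lemma pol_one: "pol (\<lambda>i. if i = 0 then \<one> else \<zero>) 1 = \<one>\<^bsub>S\<^esub>"
proof -
  have "(\<lambda>i::nat. if i = 0 then \<one> else \<zero>) \<in> UNIV \<rightarrow> carrier R" by auto
  from pol_Suc[OF this, of 0] show ?thesis by (simp add: pol_0)
qed

definition sh :: "(nat \<Rightarrow> 'a) \<Rightarrow> nat \<Rightarrow> 'a" where
  "sh f i = (if i = 0 then \<zero> else f (i - 1))"

lemma sh_closed: "f \<in> UNIV \<rightarrow> carrier R \<Longrightarrow> sh f \<in> UNIV \<rightarrow> carrier R"
  unfolding sh_def by auto

lemma sh_Suc[simp]: "sh f (Suc n) = f n" by (simp add: sh_def)

lemma x_pow_comm: "x \<otimes>\<^bsub>S\<^esub> x [^]\<^bsub>S\<^esub> (n::nat) = x [^]\<^bsub>S\<^esub> n \<otimes>\<^bsub>S\<^esub> x"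
  using x_closed by (metis S.nat_pow_Suc S.nat_pow_Suc2)

lemma pol_sh_1: "f \<in> UNIV \<rightarrow> carrier R \<Longrightarrow> pol (sh f) 1 = \<zero>\<^bsub>S\<^esub>"
  using pol_Suc[OF sh_closed, of f 0] by (simp add: pol_0 sh_def)

lemma pol_times_x: "f \<in> UNIV \<rightarrow> carrier R \<Longrightarrow> pol f n \<otimes>\<^bsub>S\<^esub> x = pol (sh f) (Suc n)"
proof (induction n)
  case 0 then show ?case using x_closed pol_sh_1[OF 0] by (simp add: pol_0)
next
  case (Suc n)
  have c: "f n \<in> carrier R" using Suc.prems by auto
  have xn: "x [^]\<^bsub>S\<^esub> n \<in> carrier S" using x_closed by simp
  have "pol f (Suc n) \<otimes>\<^bsub>S\<^esub> x = pol f n \<otimes>\<^bsub>S\<^esub> x \<oplus>\<^bsub>S\<^esub> \<iota> (f n) \<otimes>\<^bsub>S\<^esub> x [^]\<^bsub>S\<^esub> Suc n"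
    using c xn x_closed pol_closed[OF Suc.prems]
    by (simp add: pol_Suc[OF Suc.prems] S.l_distr S.m_assoc S.nat_pow_Suc)
  also have "\<dots> = pol (sh f) (Suc (Suc n))"
    using Suc by (simp add: pol_Suc[OF sh_closed[OF Suc.prems]])
  finally show ?case .
qed

lemma x_times_pol: "f \<in> UNIV \<rightarrow> carrier R \<Longrightarrow>
   x \<otimes>\<^bsub>S\<^esub> pol f n = pol (sh f) (Suc n) \<oplus>\<^bsub>S\<^esub> pol (\<lambda>i. \<delta> (f i)) n"
proof (induction n)
  case 0 then show ?case using x_closed pol_sh_1[OF 0] by (simp add: pol_0)
next
  case (Suc n)
  have c: "f n \<in> carrier R" "\<delta> (f n) \<in> carrier R" using Suc.prems delta_closed by auto
  have df: "(\<lambda>i. \<delta> (f i)) \<in> UNIV \<rightarrow> carrier R" using Suc.prems delta_closed by auto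
  have xn: "x [^]\<^bsub>S\<^esub> n \<in> carrier S" using x_closed by simp
  have "x \<otimes>\<^bsub>S\<^esub> pol f (Suc n) = x \<otimes>\<^bsub>S\<^esub> pol f n \<oplus>\<^bsub>S\<^esub> (x \<otimes>\<^bsub>S\<^esub> \<iota> (f n)) \<otimes>\<^bsub>S\<^esub> x [^]\<^bsub>S\<^esub> n"
    using c xn x_closed pol_closed[OF Suc.prems]
    by (simp add: pol_Suc[OF Suc.prems] S.r_distr S.m_assoc)
  also have "\<dots> = x \<otimes>\<^bsub>S\<^esub> pol f n \<oplus>\<^bsub>S\<^esub> (\<iota> (f n) \<otimes>\<^bsub>S\<^esub> x [^]\<^bsub>S\<^esub> Suc n \<oplus>\<^bsub>S\<^esub> \<iota> (\<delta> (f n)) \<otimes>\<^bsub>S\<^esub> x [^]\<^bsub>S\<^esub> n)"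
    using c xn x_closed by (simp add: comm_x S.l_distr S.m_assoc x_pow_comm)
  also have "\<dots> = pol (sh f) (Suc (Suc n)) \<oplus>\<^bsub>S\<^esub> pol (\<lambda>i. \<delta> (f i)) (Suc n)"
  proof -
    have shc: "sh f n \<in> carrier R" using sh_closed[OF Suc.prems] by auto
    have A: "\<iota> (sh f n) \<otimes>\<^bsub>S\<^esub> x [^]\<^bsub>S\<^esub> n \<in> carrier S" using shc xn by simp
    have B: "\<iota> (f n) \<otimes>\<^bsub>S\<^esub> x [^]\<^bsub>S\<^esub> Suc n \<in> carrier S" using c x_closed by simp
    have C: "\<iota> (\<delta> (f n)) \<otimes>\<^bsub>S\<^esub> x [^]\<^bsub>S\<^esub> n \<in> carrier S" using c xn by simp
    have P1: "pol (sh f) n \<in> carrier S" by (rule pol_closed[OF sh_closed[OF Suc.prems]])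
    have P2: "pol (\<lambda>i. \<delta> (f i)) n \<in> carrier S" by (rule pol_closed[OF df])
    have e1: "pol (sh f) (Suc (Suc n)) = pol (sh f) n \<oplus>\<^bsub>S\<^esub> \<iota> (sh f n) \<otimes>\<^bsub>S\<^esub> x [^]\<^bsub>S\<^esub> n
       \<oplus>\<^bsub>S\<^esub> \<iota> (f n) \<otimes>\<^bsub>S\<^esub> x [^]\<^bsub>S\<^esub> Suc n"
      using pol_Suc[OF sh_closed[OF Suc.prems]] by simp
    have e2: "pol (\<lambda>i. \<delta> (f i)) (Suc n) = pol (\<lambda>i. \<delta> (f i)) n \<oplus>\<^bsub>S\<^esub> \<iota> (\<delta> (f n)) \<otimes>\<^bsub>S\<^esub> x [^]\<^bsub>S\<^esub> n"
      using pol_Suc[OF df] by simp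
    have e3: "x \<otimes>\<^bsub>S\<^esub> pol f n = pol (sh f) n \<oplus>\<^bsub>S\<^esub> \<iota> (sh f n) \<otimes>\<^bsub>S\<^esub> x [^]\<^bsub>S\<^esub> n \<oplus>\<^bsub>S\<^esub> pol (\<lambda>i. \<delta> (f i)) n"
      using Suc.IH[OF Suc.prems] pol_Suc[OF sh_closed[OF Suc.prems]] by simp
    show ?thesis unfolding e1 e2 e3 using A B C P1 P2 by (simp add: S.a_ac)
  qed
  finally show ?case .
qed

lemma iota_times_pol: "f \<in> UNIV \<rightarrow> carrier R \<Longrightarrow> r \<in> carrier R \<Longrightarrow>
   \<iota> r \<otimes>\<^bsub>S\<^esub> pol f n = pol (\<lambda>i. r \<otimes> f i) n"
proof (induction n)
  case 0 then show ?case by (simp add: pol_def)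
next
  case (Suc n)
  have c: "f n \<in> carrier R" using Suc.prems by auto
  have rf: "(\<lambda>i. r \<otimes> f i) \<in> UNIV \<rightarrow> carrier R" using Suc.prems by auto
  have xn: "x [^]\<^bsub>S\<^esub> n \<in> carrier S" using x_closed by simp
  show ?case using Suc c xn pol_closed[OF Suc.prems(1)]
    by (simp add: pol_Suc[OF Suc.prems(1)] pol_Suc[OF rf] S.r_distr S.m_assoc)
qed

lemma xpow_comm: assumes "\<forall>r\<in>carrier R. \<delta> r = \<zero>" "r \<in> carrier R"
  shows "x [^]\<^bsub>S\<^esub> (n::nat) \<otimes>\<^bsub>S\<^esub> \<iota> r = \<iota> r \<otimes>\<^bsub>S\<^esub> x [^]\<^bsub>S\<^esub> n"
proof (induction n)
  case 0 then show ?case using assms by simp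
next
  case (Suc n)
  have xn: "x [^]\<^bsub>S\<^esub> n \<in> carrier S" using x_closed by simp
  have "x [^]\<^bsub>S\<^esub> Suc n \<otimes>\<^bsub>S\<^esub> \<iota> r = x [^]\<^bsub>S\<^esub> n \<otimes>\<^bsub>S\<^esub> (x \<otimes>\<^bsub>S\<^esub> \<iota> r)"
    using xn x_closed assms by (simp add: S.nat_pow_Suc S.m_assoc)
  also have "\<dots> = x [^]\<^bsub>S\<^esub> n \<otimes>\<^bsub>S\<^esub> (\<iota> r \<otimes>\<^bsub>S\<^esub> x)"
    using assms comm_x[of r] x_closed by simp
  also have "\<dots> = \<iota> r \<otimes>\<^bsub>S\<^esub> x [^]\<^bsub>S\<^esub> Suc n"
    using Suc xn x_closed assms by (simp add: S.nat_pow_Suc S.m_assoc[symmetric])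
  finally show ?case .
qed

lemma pol_times_iota: "\<forall>r\<in>carrier R. \<delta> r = \<zero> \<Longrightarrow> f \<in> UNIV \<rightarrow> carrier R \<Longrightarrow> r \<in> carrier R \<Longrightarrow>
   pol f n \<otimes>\<^bsub>S\<^esub> \<iota> r = pol (\<lambda>i. f i \<otimes> r) n"
proof (induction n)
  case 0 then show ?case by (simp add: pol_def)
next
  case (Suc n)
  have c: "f n \<in> carrier R" using Suc.prems by auto
  have rf: "(\<lambda>i. f i \<otimes> r) \<in> UNIV \<rightarrow> carrier R" using Suc.prems by auto
  have xn: "x [^]\<^bsub>S\<^esub> n \<in> carrier S" using x_closed by simp
  show ?case using Suc c xn pol_closed[OF Suc.prems(2)] xpow_comm[OF Suc.prems(1,3), of n]
    by (simp add: pol_Suc[OF Suc.prems(2)] pol_Suc[OF rf] S.l_distr S.m_assoc)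
qed

lemma span_pol: assumes "s \<in> carrier S"
  obtains f n where "f \<in> UNIV \<rightarrow> carrier R" "\<forall>i\<ge>n. f i = \<zero>" "s = pol f n"
proof -
  obtain n f where f: "f \<in> {..<n} \<rightarrow> carrier R"
    "s = (\<Oplus>\<^bsub>S\<^esub>i\<in>{..<n}. \<iota> (f i) \<otimes>\<^bsub>S\<^esub> x [^]\<^bsub>S\<^esub> (i::nat))"
    using span[OF assms] by blast
  define g where "g i = (if i < n then f i else \<zero>)" for i
  have "g \<in> UNIV \<rightarrow> carrier R" using f(1) by (auto simp: g_def)
  moreover have "\<forall>i\<ge>n. g i = \<zero>" by (simp add: g_def)
  moreover have "s = pol g n" unfolding f(2) pol_def
    by (rule S.finsum_cong) (use f(1) x_closed in \<open>auto simp: g_def Pi_iff\<close>)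
  ultimately show ?thesis using that by blast
qed

lemma pol_zero_fun: "pol (\<lambda>i. \<zero>) n = \<zero>\<^bsub>S\<^esub>"
  unfolding pol_def using x_closed by (simp add: S.finsum_zero)

lemma down:
  assumes f: "f \<in> UNIV \<rightarrow> carrier R" "\<forall>i\<ge>n. f i = \<zero>"
    and h: "h \<zero> = \<zero>"
    and eq: "\<And>i. sh f i \<oplus> h (f i) = (if i = 0 then \<one> else \<zero>)"
    and nz: "\<one> \<noteq> \<zero>"
  shows False
proof -
  have "\<forall>i. n \<le> i + d \<longrightarrow> f i = \<zero>" for d
  proof (induction d)
    case 0 then show ?case using f by simp
  next
    case (Suc d)
    show ?case
    proof (intro allI impI)
      fix i assume "n \<le> i + Suc d"
      then have "f (Suc i) = \<zero>" using Suc by simp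
      then have "f i \<oplus> \<zero> = \<zero>" using eq[of "Suc i"] h by simp
      then show "f i = \<zero>" using f by (auto simp: Pi_iff)
    qed
  qed
  then have "f 0 = \<zero>" by (metis le_add2)
  then show False using eq[of 0] h nz by (simp add: sh_def)
qed

lemma no_one:
  assumes f: "f \<in> UNIV \<rightarrow> carrier R" "\<forall>i\<ge>n. f i = \<zero>"
    and h: "h \<in> carrier R \<rightarrow> carrier R" "h \<zero> = \<zero>"
    and eq: "pol (sh f) (Suc n) \<oplus>\<^bsub>S\<^esub> pol (\<lambda>i. h (f i)) n = \<one>\<^bsub>S\<^esub>"
    and nz: "\<one> \<noteq> \<zero>"
  shows False
proof -
  have hf: "(\<lambda>i. h (f i)) \<in> UNIV \<rightarrow> carrier R" using f h by (auto simp: Pi_iff)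
  have hz: "\<forall>i\<ge>n. h (f i) = \<zero>" using f h by simp
  have "pol (\<lambda>i. h (f i)) n = pol (\<lambda>i. h (f i)) (Suc n)" using pol_ext[OF hf hz, of "Suc n"] by simp
  then have "pol (\<lambda>i. sh f i \<oplus> h (f i)) (Suc n) = pol (\<lambda>i. if i = 0 then \<one> else \<zero>) 1"
    using eq pol_add[OF sh_closed[OF f(1)] hf] pol_one by simp
  moreover have "(\<lambda>i. sh f i \<oplus> h (f i)) \<in> UNIV \<rightarrow> carrier R"
    using sh_closed[OF f(1)] hf by (auto simp: Pi_iff)
  moreover have "\<forall>i\<ge>Suc n. sh f i \<oplus> h (f i) = \<zero>" using f h by (auto simp: sh_def)
  moreover have "(\<lambda>i::nat. if i = 0 then \<one> else \<zero>) \<in> UNIV \<rightarrow> carrier R" by auto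
  moreover have "\<forall>i::nat\<ge>1. (if i = 0 then \<one> else \<zero>) = \<zero>" by (auto simp del: One_nat_def)
  ultimately have "\<And>i. sh f i \<oplus> h (f i) = (if i = 0 then \<one> else \<zero>)"
    using pol_unique by blast
  then show False using down[OF f, of h] h nz by blast
qed

lemma left_proper:
  assumes r: "r \<in> carrier R" and d: "r = \<zero> \<or> (\<forall>r\<in>carrier R. \<delta> r = \<zero>)"
    and s: "s \<in> carrier S" and nz: "\<one> \<noteq> \<zero>"
  shows "s \<otimes>\<^bsub>S\<^esub> (x \<ominus>\<^bsub>S\<^esub> \<iota> r) \<noteq> \<one>\<^bsub>S\<^esub>"
proof
  assume eq: "s \<otimes>\<^bsub>S\<^esub> (x \<ominus>\<^bsub>S\<^esub> \<iota> r) = \<one>\<^bsub>S\<^esub>"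
  obtain f n where f: "f \<in> UNIV \<rightarrow> carrier R" "\<forall>i\<ge>n. f i = \<zero>" "s = pol f n"
    using span_pol[OF s] by blast
  have sr: "s \<otimes>\<^bsub>S\<^esub> \<iota> r = pol (\<lambda>i. f i \<otimes> r) n"
  proof (cases "r = \<zero>")
    case True
    have "pol (\<lambda>i. f i \<otimes> r) n = pol (\<lambda>i. \<zero>) n"
      unfolding pol_def using True f(1) x_closed by (intro S.finsum_cong) (auto simp: Pi_iff)
    then show ?thesis using True s pol_zero_fun by simp
  next
    case False
    then show ?thesis using pol_times_iota[OF _ f(1) r] d f(3) by auto
  qed
  have fr: "(\<lambda>i. f i \<otimes> r) \<in> UNIV \<rightarrow> carrier R" using f r by (auto simp: Pi_iff)
  have "s \<otimes>\<^bsub>S\<^esub> (x \<ominus>\<^bsub>S\<^esub> \<iota> r) = s \<otimes>\<^bsub>S\<^esub> x \<oplus>\<^bsub>S\<^esub> \<ominus>\<^bsub>S\<^esub> (s \<otimes>\<^bsub>S\<^esub> \<iota> r)"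
    using s r x_closed by (simp add: S.minus_eq S.r_distr S.r_minus)
  also have "\<dots> = pol (sh f) (Suc n) \<oplus>\<^bsub>S\<^esub> pol (\<lambda>i. \<ominus> (f i \<otimes> r)) n"
    using sr pol_times_x[OF f(1)] f(3) pol_neg[OF fr] by simp
  finally have "pol (sh f) (Suc n) \<oplus>\<^bsub>S\<^esub> pol (\<lambda>i. (\<lambda>a. \<ominus> (a \<otimes> r)) (f i)) n = \<one>\<^bsub>S\<^esub>"
    using eq by simp
  moreover have "(\<lambda>a. \<ominus> (a \<otimes> r)) \<in> carrier R \<rightarrow> carrier R" using r by auto
  moreover have "(\<lambda>a. \<ominus> (a \<otimes> r)) \<zero> = \<zero>" using r by simp
  ultimately show False using no_one[OF f(1,2)] nz by blast
qed

lemma right_proper: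
  assumes r: "r \<in> carrier R" and s: "s \<in> carrier S" and nz: "\<one> \<noteq> \<zero>"
  shows "(x \<ominus>\<^bsub>S\<^esub> \<iota> r) \<otimes>\<^bsub>S\<^esub> s \<noteq> \<one>\<^bsub>S\<^esub>"
proof
  assume eq: "(x \<ominus>\<^bsub>S\<^esub> \<iota> r) \<otimes>\<^bsub>S\<^esub> s = \<one>\<^bsub>S\<^esub>"
  obtain f n where f: "f \<in> UNIV \<rightarrow> carrier R" "\<forall>i\<ge>n. f i = \<zero>" "s = pol f n"
    using span_pol[OF s] by blast
  have fr: "(\<lambda>i. r \<otimes> f i) \<in> UNIV \<rightarrow> carrier R" using f r by (auto simp: Pi_iff)
  have df: "(\<lambda>i. \<delta> (f i)) \<in> UNIV \<rightarrow> carrier R" using f delta_closed by (auto simp: Pi_iff)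
  have "(x \<ominus>\<^bsub>S\<^esub> \<iota> r) \<otimes>\<^bsub>S\<^esub> s = x \<otimes>\<^bsub>S\<^esub> s \<oplus>\<^bsub>S\<^esub> \<ominus>\<^bsub>S\<^esub> (\<iota> r \<otimes>\<^bsub>S\<^esub> s)"
    using s r x_closed by (simp add: S.minus_eq S.l_distr S.l_minus)
  also have "\<dots> = pol (sh f) (Suc n) \<oplus>\<^bsub>S\<^esub> pol (\<lambda>i. \<delta> (f i)) n \<oplus>\<^bsub>S\<^esub> pol (\<lambda>i. \<ominus> (r \<otimes> f i)) n"
    using x_times_pol[OF f(1)] iota_times_pol[OF f(1) r] f(3) pol_neg[OF fr] by simp
  also have "\<dots> = pol (sh f) (Suc n) \<oplus>\<^bsub>S\<^esub> pol (\<lambda>i. (\<lambda>a. \<delta> a \<oplus> \<ominus> (r \<otimes> a)) (f i)) n"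
  proof -
    have nf: "(\<lambda>i. \<ominus> (r \<otimes> f i)) \<in> UNIV \<rightarrow> carrier R" using fr by (auto simp: Pi_iff)
    show ?thesis using pol_add[OF df nf] pol_closed[OF sh_closed[OF f(1)]] pol_closed[OF df] pol_closed[OF nf]
      by (simp add: S.a_assoc)
  qed
  finally have "pol (sh f) (Suc n) \<oplus>\<^bsub>S\<^esub> pol (\<lambda>i. (\<lambda>a. \<delta> a \<oplus> \<ominus> (r \<otimes> a)) (f i)) n = \<one>\<^bsub>S\<^esub>"
    using eq by simp
  moreover have "(\<lambda>a. \<delta> a \<oplus> \<ominus> (r \<otimes> a)) \<in> carrier R \<rightarrow> carrier R" using r delta_closed by auto
  moreover have "(\<lambda>a. \<delta> a \<oplus> \<ominus> (r \<otimes> a)) \<zero> = \<zero>" using r delta_zero by simp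
  ultimately show False using no_one[OF f(1,2)] nz by blast
qed

end


lemma (in ring) add_sub_intro:
  assumes "H \<subseteq> carrier R" "\<zero> \<in> H" "\<And>x y. x \<in> H \<Longrightarrow> y \<in> H \<Longrightarrow> x \<oplus> y \<in> H"
    "\<And>x. x \<in> H \<Longrightarrow> \<ominus> x \<in> H"
  shows "additive_subgroup H R"
  apply (rule additive_subgroupI, rule subgroup.intro)
  using assms by (auto simp: a_inv_def[symmetric])

lemma (in ring) exists_max_left:
  assumes a: "a \<in> carrier R" and na: "\<forall>s\<in>carrier R. s \<otimes> a \<noteq> \<one>"
    and lqd: "left_quasi_duo R"
  shows "\<exists>M. ideal M R \<and> a \<in> M \<and> \<one> \<notin> M"
proof -
  define L where "L = (\<lambda>s. s \<otimes> a) ` carrier R"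
  have Lsub: "L \<subseteq> carrier R" using a unfolding L_def by auto
  have L0: "\<zero> \<in> L"
  proof -
    have "\<zero> = \<zero> \<otimes> a" using a by simp
    then show ?thesis unfolding L_def by (rule image_eqI) simp
  qed
  have Ladd: "x \<oplus> y \<in> L" if H: "x \<in> L" "y \<in> L" for x y
  proof -
    obtain u where u: "x = u \<otimes> a" "u \<in> carrier R" using H(1) unfolding L_def by (rule imageE)
    obtain v where v: "y = v \<otimes> a" "v \<in> carrier R" using H(2) unfolding L_def by (rule imageE)
    note uv = u(2) v(2) u(1) v(1)
    then have "x \<oplus> y = (u \<oplus> v) \<otimes> a" using a by (simp add: l_distr)
    moreover have "u \<oplus> v \<in> carrier R" using uv by simp
    ultimately show ?thesis unfolding L_def by (rule image_eqI)
  qed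
  have Lneg: "\<ominus> x \<in> L" if H: "x \<in> L" for x
  proof -
    obtain u where uv': "x = u \<otimes> a" "u \<in> carrier R" using H unfolding L_def by (rule imageE)
    note uv = uv'(2) uv'(1)
    then have "\<ominus> x = (\<ominus> u) \<otimes> a" using a by (simp add: l_minus)
    moreover have "\<ominus> u \<in> carrier R" using uv by simp
    ultimately show ?thesis unfolding L_def by (rule image_eqI)
  qed
  have Lmul: "b \<otimes> y \<in> L" if H: "b \<in> carrier R" "y \<in> L" for b y
  proof -
    obtain u where uv': "y = u \<otimes> a" "u \<in> carrier R" using H(2) unfolding L_def by (rule imageE)
    note uv = uv'(2) uv'(1)
    then have "b \<otimes> y = (b \<otimes> u) \<otimes> a" using a H by (simp add: m_assoc)
    moreover have "b \<otimes> u \<in> carrier R" using uv H by simp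
    ultimately show ?thesis unfolding L_def by (rule image_eqI)
  qed
  have Lid: "left_ideal L R" unfolding left_ideal_def
    using add_sub_intro[OF Lsub L0 Ladd Lneg] Lmul by blast
  define A where "A = {J. left_ideal J R \<and> a \<in> J \<and> \<one> \<notin> J}"
  have aL: "a \<in> L"
  proof -
    have "a = \<one> \<otimes> a" using a by simp
    then show ?thesis unfolding L_def by (rule image_eqI) simp
  qed
  have oL: "\<one> \<notin> L" unfolding L_def using na by auto
  have LA: "L \<in> A" unfolding A_def using Lid aL oL by blast
  have "\<exists>M\<in>A. \<forall>Z\<in>A. M \<subseteq> Z \<longrightarrow> Z = M"
  proof (rule subset_Zorn_nonempty)
    show "A \<noteq> {}" using LA by auto
    fix C assume C: "C \<noteq> {}" "subset.chain A C"
    have CA: "C \<subseteq> A" and ch: "\<And>Z W. Z \<in> C \<Longrightarrow> W \<in> C \<Longrightarrow> Z \<subseteq> W \<or> W \<subseteq> Z"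
      using C(2) unfolding subset.chain_def by auto
    have li: "\<And>Z. Z \<in> C \<Longrightarrow> left_ideal Z R" using CA by (auto simp: A_def)
    have ag: "\<And>Z. Z \<in> C \<Longrightarrow> additive_subgroup Z R" using li by (auto simp: left_ideal_def)
    have "left_ideal (\<Union>C) R" unfolding left_ideal_def
    proof
      show "additive_subgroup (\<Union>C) R"
      proof (rule add_sub_intro)
        show "\<Union>C \<subseteq> carrier R" using ag additive_subgroup.a_subset by (metis Union_least)
        show "\<zero> \<in> \<Union>C" using C(1) ag additive_subgroup.zero_closed by (metis UnionI ex_in_conv)
        show "x \<oplus> y \<in> \<Union>C" if H: "x \<in> \<Union>C" "y \<in> \<Union>C" for x y
        proof -
          obtain Z W where "Z \<in> C" "W \<in> C" "x \<in> Z" "y \<in> W" using H by auto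
          then show ?thesis
          proof (cases "Z \<subseteq> W")
            case True
            then show ?thesis using \<open>W \<in> C\<close> \<open>x \<in> Z\<close> \<open>y \<in> W\<close> additive_subgroup.a_closed[OF ag[OF \<open>W \<in> C\<close>]] by blast
          next
            case False
            then have "W \<subseteq> Z" using ch[of Z W] \<open>Z \<in> C\<close> \<open>W \<in> C\<close> by blast
            then show ?thesis using \<open>Z \<in> C\<close> \<open>x \<in> Z\<close> \<open>y \<in> W\<close> additive_subgroup.a_closed[OF ag[OF \<open>Z \<in> C\<close>]] by blast
          qed
        qed
        show "\<ominus> x \<in> \<Union>C" if "x \<in> \<Union>C" for x
          using that ag additive_subgroup.a_inv_closed by (metis UnionE UnionI)
      qed
      show "\<forall>b\<in>carrier R. \<forall>y\<in>\<Union>C. b \<otimes> y \<in> \<Union>C"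
      proof (intro ballI)
        fix b y assume "b \<in> carrier R" "y \<in> \<Union>C"
        then obtain Z where "Z \<in> C" "y \<in> Z" by blast
        then have "b \<otimes> y \<in> Z" using li[OF \<open>Z \<in> C\<close>] \<open>b \<in> carrier R\<close> unfolding left_ideal_def by blast
        then show "b \<otimes> y \<in> \<Union>C" using \<open>Z \<in> C\<close> by blast
      qed
    qed
    moreover have "a \<in> \<Union>C" using C(1) CA by (auto simp: A_def)
    moreover have "\<one> \<notin> \<Union>C" using CA by (auto simp: A_def)
    ultimately show "\<Union>C \<in> A" by (simp add: A_def)
  qed
  then obtain M where MA: "M \<in> A" and Mmax: "\<forall>Z\<in>A. M \<subseteq> Z \<longrightarrow> Z = M" by blast
  have "maximal_left_ideal M R" unfolding maximal_left_ideal_def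
  proof (intro conjI allI impI)
    show "left_ideal M R" using MA by (simp add: A_def)
    show "M \<noteq> carrier R" using MA by (auto simp: A_def)
    fix J assume J: "left_ideal J R \<and> M \<subseteq> J"
    show "J = M \<or> J = carrier R"
    proof (cases "\<one> \<in> J")
      case True
      have "J \<subseteq> carrier R" using J additive_subgroup.a_subset unfolding left_ideal_def by blast
      moreover have "carrier R \<subseteq> J"
      proof
        fix s assume "s \<in> carrier R"
        then have "s \<otimes> \<one> \<in> J" using J True unfolding left_ideal_def by blast
        then show "s \<in> J" using \<open>s \<in> carrier R\<close> by simp
      qed
      ultimately show ?thesis by blast
    next
      case False
      then have "J \<in> A" using J MA by (auto simp: A_def)
      then show ?thesis using Mmax J by blast
    qed
  qed
  then have "ideal M R" using lqd by (simp add: left_quasi_duo_def)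
  then show ?thesis using MA by (auto simp: A_def)
qed

lemma (in ring) exists_max_right:
  assumes a: "a \<in> carrier R" and na: "\<forall>s\<in>carrier R. a \<otimes> s \<noteq> \<one>"
    and lqd: "right_quasi_duo R"
  shows "\<exists>M. ideal M R \<and> a \<in> M \<and> \<one> \<notin> M"
proof -
  define L where "L = (\<lambda>s. a \<otimes> s) ` carrier R"
  have Lsub: "L \<subseteq> carrier R" using a unfolding L_def by auto
  have L0: "\<zero> \<in> L"
  proof -
    have "\<zero> = a \<otimes> \<zero>" using a by simp
    then show ?thesis unfolding L_def by (rule image_eqI) simp
  qed
  have Ladd: "x \<oplus> y \<in> L" if H: "x \<in> L" "y \<in> L" for x y
  proof -
    obtain u where u: "x = a \<otimes> u" "u \<in> carrier R" using H(1) unfolding L_def by (rule imageE)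
    obtain v where v: "y = a \<otimes> v" "v \<in> carrier R" using H(2) unfolding L_def by (rule imageE)
    note uv = u(2) v(2) u(1) v(1)
    then have "x \<oplus> y = a \<otimes> (u \<oplus> v)" using a by (simp add: r_distr)
    moreover have "u \<oplus> v \<in> carrier R" using uv by simp
    ultimately show ?thesis unfolding L_def by (rule image_eqI)
  qed
  have Lneg: "\<ominus> x \<in> L" if H: "x \<in> L" for x
  proof -
    obtain u where uv': "x = a \<otimes> u" "u \<in> carrier R" using H unfolding L_def by (rule imageE)
    note uv = uv'(2) uv'(1)
    then have "\<ominus> x = a \<otimes> (\<ominus> u)" using a by (simp add: r_minus)
    moreover have "\<ominus> u \<in> carrier R" using uv by simp
    ultimately show ?thesis unfolding L_def by (rule image_eqI)
  qed
  have Lmul: "y \<otimes> b \<in> L" if H: "b \<in> carrier R" "y \<in> L" for b y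
  proof -
    obtain u where uv': "y = a \<otimes> u" "u \<in> carrier R" using H(2) unfolding L_def by (rule imageE)
    note uv = uv'(2) uv'(1)
    then have "y \<otimes> b = a \<otimes> (u \<otimes> b)" using a H by (simp add: m_assoc)
    moreover have "u \<otimes> b \<in> carrier R" using uv H by simp
    ultimately show ?thesis unfolding L_def by (rule image_eqI)
  qed
  have Lid: "right_ideal L R" unfolding right_ideal_def
    using add_sub_intro[OF Lsub L0 Ladd Lneg] Lmul by blast
  define A where "A = {J. right_ideal J R \<and> a \<in> J \<and> \<one> \<notin> J}"
  have aL: "a \<in> L"
  proof -
    have "a = a \<otimes> \<one>" using a by simp
    then show ?thesis unfolding L_def by (rule image_eqI) simp
  qed
  have oL: "\<one> \<notin> L" unfolding L_def using na by auto
  have LA: "L \<in> A" unfolding A_def using Lid aL oL by blast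
  have "\<exists>M\<in>A. \<forall>Z\<in>A. M \<subseteq> Z \<longrightarrow> Z = M"
  proof (rule subset_Zorn_nonempty)
    show "A \<noteq> {}" using LA by auto
    fix C assume C: "C \<noteq> {}" "subset.chain A C"
    have CA: "C \<subseteq> A" and ch: "\<And>Z W. Z \<in> C \<Longrightarrow> W \<in> C \<Longrightarrow> Z \<subseteq> W \<or> W \<subseteq> Z"
      using C(2) unfolding subset.chain_def by auto
    have li: "\<And>Z. Z \<in> C \<Longrightarrow> right_ideal Z R" using CA by (auto simp: A_def)
    have ag: "\<And>Z. Z \<in> C \<Longrightarrow> additive_subgroup Z R" using li by (auto simp: right_ideal_def)
    have "right_ideal (\<Union>C) R" unfolding right_ideal_def
    proof
      show "additive_subgroup (\<Union>C) R"
      proof (rule add_sub_intro)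
        show "\<Union>C \<subseteq> carrier R" using ag additive_subgroup.a_subset by (metis Union_least)
        show "\<zero> \<in> \<Union>C" using C(1) ag additive_subgroup.zero_closed by (metis UnionI ex_in_conv)
        show "x \<oplus> y \<in> \<Union>C" if H: "x \<in> \<Union>C" "y \<in> \<Union>C" for x y
        proof -
          obtain Z W where "Z \<in> C" "W \<in> C" "x \<in> Z" "y \<in> W" using H by auto
          then show ?thesis
          proof (cases "Z \<subseteq> W")
            case True
            then show ?thesis using \<open>W \<in> C\<close> \<open>x \<in> Z\<close> \<open>y \<in> W\<close> additive_subgroup.a_closed[OF ag[OF \<open>W \<in> C\<close>]] by blast
          next
            case False
            then have "W \<subseteq> Z" using ch[of Z W] \<open>Z \<in> C\<close> \<open>W \<in> C\<close> by blast
            then show ?thesis using \<open>Z \<in> C\<close> \<open>x \<in> Z\<close> \<open>y \<in> W\<close> additive_subgroup.a_closed[OF ag[OF \<open>Z \<in> C\<close>]] by blast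
          qed
        qed
        show "\<ominus> x \<in> \<Union>C" if "x \<in> \<Union>C" for x
          using that ag additive_subgroup.a_inv_closed by (metis UnionE UnionI)
      qed
      show "\<forall>b\<in>carrier R. \<forall>y\<in>\<Union>C. y \<otimes> b \<in> \<Union>C"
      proof (intro ballI)
        fix b y assume "b \<in> carrier R" "y \<in> \<Union>C"
        then obtain Z where "Z \<in> C" "y \<in> Z" by blast
        then have "y \<otimes> b \<in> Z" using li[OF \<open>Z \<in> C\<close>] \<open>b \<in> carrier R\<close> unfolding right_ideal_def by blast
        then show "y \<otimes> b \<in> \<Union>C" using \<open>Z \<in> C\<close> by blast
      qed
    qed
    moreover have "a \<in> \<Union>C" using C(1) CA by (auto simp: A_def)
    moreover have "\<one> \<notin> \<Union>C" using CA by (auto simp: A_def)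
    ultimately show "\<Union>C \<in> A" by (simp add: A_def)
  qed
  then obtain M where MA: "M \<in> A" and Mmax: "\<forall>Z\<in>A. M \<subseteq> Z \<longrightarrow> Z = M" by blast
  have "maximal_right_ideal M R" unfolding maximal_right_ideal_def
  proof (intro conjI allI impI)
    show "right_ideal M R" using MA by (simp add: A_def)
    show "M \<noteq> carrier R" using MA by (auto simp: A_def)
    fix J assume J: "right_ideal J R \<and> M \<subseteq> J"
    show "J = M \<or> J = carrier R"
    proof (cases "\<one> \<in> J")
      case True
      have "J \<subseteq> carrier R" using J additive_subgroup.a_subset unfolding right_ideal_def by blast
      moreover have "carrier R \<subseteq> J"
      proof
        fix s assume "s \<in> carrier R"
        then have "\<one> \<otimes> s \<in> J" using J True unfolding right_ideal_def by blast
        then show "s \<in> J" using \<open>s \<in> carrier R\<close> by simp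
      qed
      ultimately show ?thesis by blast
    next
      case False
      then have "J \<in> A" using J MA by (auto simp: A_def)
      then show ?thesis using Mmax J by blast
    qed
  qed
  then have "ideal M R" using lqd by (simp add: right_quasi_duo_def)
  then show ?thesis using MA by (auto simp: A_def)
qed



theorem lemma2p1:
  fixes R :: "('a, 'm) ring_scheme" and S :: "('b, 'n) ring_scheme"
    and \<delta> :: "'a \<Rightarrow> 'a" and \<iota> :: "'a \<Rightarrow> 'b" and x :: 'b
  assumes "simple_ring R"
    and "derivation R \<delta>"
    and "diff_poly_ring R \<delta> S \<iota> x"
    and "left_quasi_duo S \<or> right_quasi_duo S"
  shows "field R \<and> (\<forall>r\<in>carrier R. \<delta> r = \<zero>\<^bsub>R\<^esub>)"
proof -
  have rR: "ring R" and cnz: "carrier R \<noteq> {\<zero>\<^bsub>R\<^esub>}"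
    and triv: "\<And>I. ideal I R \<Longrightarrow> I = {\<zero>\<^bsub>R\<^esub>} \<or> I = carrier R"
    using assms(1) unfolding simple_ring_def by auto
  have rS: "ring S" and hom: "\<iota> \<in> ring_hom R S" and xc: "x \<in> carrier S"
    and cx: "\<forall>r\<in>carrier R. x \<otimes>\<^bsub>S\<^esub> \<iota> r = \<iota> r \<otimes>\<^bsub>S\<^esub> x \<oplus>\<^bsub>S\<^esub> \<iota> (\<delta> r)"
    and sp: "\<forall>s\<in>carrier S. \<exists>n f. f \<in> {..<n} \<rightarrow> carrier R \<and>
         s = (\<Oplus>\<^bsub>S\<^esub>i\<in>{..<n}. \<iota> (f i) \<otimes>\<^bsub>S\<^esub> x [^]\<^bsub>S\<^esub> (i::nat))"
    and fr: "\<forall>n f. f \<in> {..<n} \<rightarrow> carrier R \<and>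
         (\<Oplus>\<^bsub>S\<^esub>i\<in>{..<n}. \<iota> (f i) \<otimes>\<^bsub>S\<^esub> x [^]\<^bsub>S\<^esub> (i::nat)) = \<zero>\<^bsub>S\<^esub>
         \<longrightarrow> (\<forall>i<n. f i = \<zero>\<^bsub>R\<^esub>)"
    using assms(3) unfolding diff_poly_ring_def by auto
  interpret R: ring R by (rule rR)
  interpret S: ring S by (rule rS)
  interpret D: dpr R S \<iota> \<delta> x
  proof (intro dpr.intro ring_hom_ringI2 dpr_axioms.intro rR rS hom xc assms(2))
    show "\<And>r. r \<in> carrier R \<Longrightarrow> x \<otimes>\<^bsub>S\<^esub> \<iota> r = \<iota> r \<otimes>\<^bsub>S\<^esub> x \<oplus>\<^bsub>S\<^esub> \<iota> (\<delta> r)" using cx by blast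
    show "\<And>n f i. f \<in> {..<n} \<rightarrow> carrier R \<Longrightarrow>
         (\<Oplus>\<^bsub>S\<^esub>i\<in>{..<n}. \<iota> (f i) \<otimes>\<^bsub>S\<^esub> x [^]\<^bsub>S\<^esub> (i::nat)) = \<zero>\<^bsub>S\<^esub>
         \<Longrightarrow> i < n \<Longrightarrow> f i = \<zero>\<^bsub>R\<^esub>" using fr by blast
    show "\<And>s. s \<in> carrier S \<Longrightarrow> \<exists>n f. f \<in> {..<n} \<rightarrow> carrier R \<and>
         s = (\<Oplus>\<^bsub>S\<^esub>i\<in>{..<n}. \<iota> (f i) \<otimes>\<^bsub>S\<^esub> x [^]\<^bsub>S\<^esub> (i::nat))" using sp by blast
  qed
  have nz: "\<one>\<^bsub>R\<^esub> \<noteq> \<zero>\<^bsub>R\<^esub>" using cnz R.one_zeroD by blast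
  have key: "\<And>s. s \<in> carrier R \<Longrightarrow> \<delta> s \<oplus>\<^bsub>R\<^esub> \<ominus>\<^bsub>R\<^esub> (r \<otimes>\<^bsub>R\<^esub> s) \<oplus>\<^bsub>R\<^esub> s \<otimes>\<^bsub>R\<^esub> r = \<zero>\<^bsub>R\<^esub>"
    if r: "r \<in> carrier R" and d: "r = \<zero>\<^bsub>R\<^esub> \<or> (\<forall>r\<in>carrier R. \<delta> r = \<zero>\<^bsub>R\<^esub>)" for r
  proof -
    have ac: "x \<ominus>\<^bsub>S\<^esub> \<iota> r \<in> carrier S" using xc r by simp
    obtain M where M: "ideal M S" "x \<ominus>\<^bsub>S\<^esub> \<iota> r \<in> M" "\<one>\<^bsub>S\<^esub> \<notin> M"
    proof (cases "left_quasi_duo S")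
      case True
      have "\<forall>s\<in>carrier S. s \<otimes>\<^bsub>S\<^esub> (x \<ominus>\<^bsub>S\<^esub> \<iota> r) \<noteq> \<one>\<^bsub>S\<^esub>"
        using D.left_proper[OF r d _ nz] by blast
      then show ?thesis using S.exists_max_left[OF ac _ True] that by blast
    next
      case False
      then have rq: "right_quasi_duo S" using assms(4) by blast
      have "\<forall>s\<in>carrier S. (x \<ominus>\<^bsub>S\<^esub> \<iota> r) \<otimes>\<^bsub>S\<^esub> s \<noteq> \<one>\<^bsub>S\<^esub>"
        using D.right_proper[OF r _ nz] by blast
      then show ?thesis using S.exists_max_right[OF ac _ rq] that by blast
    qed
    define I where "I = {a \<in> carrier R. \<iota> a \<in> M}"
    have "ideal I R" unfolding I_def by (rule D.ideal_vimage[OF M(1)])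
    moreover have "I \<noteq> carrier R"
    proof
      assume "I = carrier R"
      then have "\<one>\<^bsub>R\<^esub> \<in> I" by simp
      then have "\<iota> \<one>\<^bsub>R\<^esub> \<in> M" unfolding I_def by blast
      then show False using M(3) D.hom_one by simp
    qed
    ultimately have I0: "I = {\<zero>\<^bsub>R\<^esub>}" using triv by blast
    fix s assume s: "s \<in> carrier R"
    define e where "e = \<delta> s \<oplus>\<^bsub>R\<^esub> \<ominus>\<^bsub>R\<^esub> (r \<otimes>\<^bsub>R\<^esub> s) \<oplus>\<^bsub>R\<^esub> s \<otimes>\<^bsub>R\<^esub> r"
    have ec: "e \<in> carrier R" using s r D.delta_closed unfolding e_def by simp
    have A: "(x \<ominus>\<^bsub>S\<^esub> \<iota> r) \<otimes>\<^bsub>S\<^esub> \<iota> s \<in> M" using M ideal.I_r_closed s by fastforce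
    have B: "\<iota> s \<otimes>\<^bsub>S\<^esub> (x \<ominus>\<^bsub>S\<^esub> \<iota> r) \<in> M" using M ideal.I_l_closed s by fastforce
    have eq: "(x \<ominus>\<^bsub>S\<^esub> \<iota> r) \<otimes>\<^bsub>S\<^esub> \<iota> s = \<iota> s \<otimes>\<^bsub>S\<^esub> (x \<ominus>\<^bsub>S\<^esub> \<iota> r) \<oplus>\<^bsub>S\<^esub> \<iota> e"
    proof -
      have c1: "\<iota> s \<otimes>\<^bsub>S\<^esub> x \<in> carrier S" "\<iota> (\<delta> s) \<in> carrier S" "\<iota> (r \<otimes>\<^bsub>R\<^esub> s) \<in> carrier S"
        "\<iota> (s \<otimes>\<^bsub>R\<^esub> r) \<in> carrier S"
        using s r xc D.delta_closed by auto
      have l: "(x \<ominus>\<^bsub>S\<^esub> \<iota> r) \<otimes>\<^bsub>S\<^esub> \<iota> s = \<iota> s \<otimes>\<^bsub>S\<^esub> x \<oplus>\<^bsub>S\<^esub> \<iota> (\<delta> s) \<oplus>\<^bsub>S\<^esub> \<ominus>\<^bsub>S\<^esub> \<iota> (r \<otimes>\<^bsub>R\<^esub> s)"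
        using s r xc cx by (simp add: S.minus_eq S.l_distr S.l_minus)
      have rr: "\<iota> s \<otimes>\<^bsub>S\<^esub> (x \<ominus>\<^bsub>S\<^esub> \<iota> r) = \<iota> s \<otimes>\<^bsub>S\<^esub> x \<oplus>\<^bsub>S\<^esub> \<ominus>\<^bsub>S\<^esub> \<iota> (s \<otimes>\<^bsub>R\<^esub> r)"
        using s r xc by (simp add: S.minus_eq S.r_distr S.r_minus)
      have ee: "\<iota> e = \<iota> (\<delta> s) \<oplus>\<^bsub>S\<^esub> \<ominus>\<^bsub>S\<^esub> \<iota> (r \<otimes>\<^bsub>R\<^esub> s) \<oplus>\<^bsub>S\<^esub> \<iota> (s \<otimes>\<^bsub>R\<^esub> r)"
        using s r D.delta_closed unfolding e_def by (simp add: D.hom_a_inv)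
      have hh: "\<And>P Q. P \<in> carrier S \<Longrightarrow> Q \<in> carrier S \<Longrightarrow> Q \<oplus>\<^bsub>S\<^esub> (\<ominus>\<^bsub>S\<^esub> P \<oplus>\<^bsub>S\<^esub> \<ominus>\<^bsub>S\<^esub> Q) = \<ominus>\<^bsub>S\<^esub> P"
        by (metis S.a_lcomm S.a_inv_closed S.r_neg S.r_zero)
      show ?thesis unfolding l rr ee using c1 by (simp add: S.a_ac S.r_neg1 S.r_neg2 hh)
    qed
    have "\<iota> e \<in> M"
    proof -
      have "\<iota> e = \<ominus>\<^bsub>S\<^esub> (\<iota> s \<otimes>\<^bsub>S\<^esub> (x \<ominus>\<^bsub>S\<^esub> \<iota> r)) \<oplus>\<^bsub>S\<^esub> (x \<ominus>\<^bsub>S\<^esub> \<iota> r) \<otimes>\<^bsub>S\<^esub> \<iota> s"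
        using eq ec s ac by (simp add: S.r_neg1)
      then show ?thesis using A B M(1) unfolding ideal_def
        by (metis additive_subgroup.a_closed additive_subgroup.a_inv_closed)
    qed
    then have "e \<in> I" using ec unfolding I_def by blast
    then show "\<delta> s \<oplus>\<^bsub>R\<^esub> \<ominus>\<^bsub>R\<^esub> (r \<otimes>\<^bsub>R\<^esub> s) \<oplus>\<^bsub>R\<^esub> s \<otimes>\<^bsub>R\<^esub> r = \<zero>\<^bsub>R\<^esub>"
      using I0 unfolding e_def by blast
  qed
  have dz: "\<forall>r\<in>carrier R. \<delta> r = \<zero>\<^bsub>R\<^esub>"
  proof
    fix s assume s: "s \<in> carrier R"
    show "\<delta> s = \<zero>\<^bsub>R\<^esub>" using key[OF R.zero_closed _ s] s D.delta_closed by simp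
  qed
  have comm: "s \<otimes>\<^bsub>R\<^esub> r = r \<otimes>\<^bsub>R\<^esub> s" if "r \<in> carrier R" "s \<in> carrier R" for r s
  proof -
    have "\<ominus>\<^bsub>R\<^esub> (r \<otimes>\<^bsub>R\<^esub> s) \<oplus>\<^bsub>R\<^esub> s \<otimes>\<^bsub>R\<^esub> r = \<zero>\<^bsub>R\<^esub>"
      using key[OF that(1) _ that(2)] dz that by simp
    then show ?thesis using that
      by (metis R.add.inv_closed R.m_closed R.minus_equality R.minus_minus R.add.m_comm)
  qed
  have cR: "cring R"
    by (rule cringI[OF R.is_abelian_group R.monoid_comm_monoidI R.l_distr]) (use comm in auto)
  have "field R"
  proof (rule cring.trivialideals_fieldI[OF cR cnz])
    show "{I. ideal I R} = {{\<zero>\<^bsub>R\<^esub>}, carrier R}"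
      using triv R.zeroideal R.oneideal by blast
  qed
  then show ?thesis using dz by blast
qed

end
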